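(* For all positive integers $n$, \[ \sum_{k=0}^{n} (-1)^k D(n-k,k) = \begin{cases} 0, &\text{if $n$ is odd,} \\ -1, &\text{if $n \equiv 2 \pmod{4}$,} \\ 1, &\text{if $n \equiv 0 \pmod{4}$.} \end{cases} \]
   Context: For non-negative integers $m,n$, the Delannoy number $D(m,n)$ is the number of lattice paths from $(0,0)$ to $(m,n)$ using only steps from $(i,j)$ to $(i+1,j)$, $(i,j+1)$ or $(i+1,j+1)$. *)

theory Defs
  imports Main
begin

text \<open>Steps of a Delannoy lattice path: east (1,0), north (0,1), diagonal (1,1).
  A path from (0,0) to (m,n) is identified with its list of steps.\<close>

definition delannoy_steps :: "(nat \<times> nat) set" where
  "delannoy_steps = {(1,0), (0,1), (1,1)}"

definition delannoy_paths :: "nat \<Rightarrow> nat \<Rightarrow> (nat \<times> nat) list set" where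
  "delannoy_paths m n = {ps. set ps \<subseteq> delannoy_steps \<and>
      sum_list (map fst ps) = m \<and> sum_list (map snd ps) = n}"

definition delannoy :: "nat \<Rightarrow> nat \<Rightarrow> nat" where
  "delannoy m n = card (delannoy_paths m n)"

end

theory Submission
  imports Defs
begin

fun dd :: "nat \<Rightarrow> nat \<Rightarrow> nat" where
  "dd 0 0 = 1"
| "dd (Suc m) 0 = dd m 0"
| "dd 0 (Suc n) = dd 0 n"
| "dd (Suc m) (Suc n) = dd m (Suc n) + dd (Suc m) n + dd m n"

lemma dd_0: "dd m 0 = 1" by (induction m) auto
lemma dd_0': "dd 0 n = 1" by (induction n) auto

lemma step_pos: "s \<in> delannoy_steps \<Longrightarrow> fst s + snd s \<ge> 1"
  by (auto simp: delannoy_steps_def)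

lemma paths_00: "delannoy_paths 0 0 = {[]}"
proof -
  { fix ps assume "ps \<in> delannoy_paths 0 0"
    hence "ps = []"
      by (cases ps) (auto simp: delannoy_paths_def delannoy_steps_def) }
  thus ?thesis by (auto simp: delannoy_paths_def)
qed

lemma paths_Cons: "(s # qs \<in> delannoy_paths m n) \<longleftrightarrow> s \<in> delannoy_steps \<and>
   fst s \<le> m \<and> snd s \<le> n \<and> qs \<in> delannoy_paths (m - fst s) (n - snd s)"
  by (auto simp: delannoy_paths_def)

lemma paths_nonnil: "delannoy_paths (Suc m) n \<inter> {[]} = {}" "delannoy_paths m (Suc n) \<inter> {[]} = {}"
  by (auto simp: delannoy_paths_def)

lemma paths_S0: "delannoy_paths (Suc m) 0 = Cons (1,0) ` delannoy_paths m 0"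
proof (rule set_eqI)
  fix ps show "ps \<in> delannoy_paths (Suc m) 0 \<longleftrightarrow> ps \<in> Cons (1,0) ` delannoy_paths m 0"
    using paths_nonnil(1)[of m 0]
    by (cases ps) (auto simp: paths_Cons delannoy_steps_def)
qed

lemma paths_0S: "delannoy_paths 0 (Suc n) = Cons (0,1) ` delannoy_paths 0 n"
proof (rule set_eqI)
  fix ps show "ps \<in> delannoy_paths 0 (Suc n) \<longleftrightarrow> ps \<in> Cons (0,1) ` delannoy_paths 0 n"
    using paths_nonnil(2)[of 0 n]
    by (cases ps) (auto simp: paths_Cons delannoy_steps_def)
qed

lemma paths_SS: "delannoy_paths (Suc m) (Suc n) = Cons (1,0) ` delannoy_paths m (Suc n)
   \<union> Cons (0,1) ` delannoy_paths (Suc m) n \<union> Cons (1,1) ` delannoy_paths m n"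
proof (rule set_eqI)
  fix ps show "ps \<in> delannoy_paths (Suc m) (Suc n) \<longleftrightarrow> ps \<in> Cons (1,0) ` delannoy_paths m (Suc n)
   \<union> Cons (0,1) ` delannoy_paths (Suc m) n \<union> Cons (1,1) ` delannoy_paths m n"
    using paths_nonnil(1)[of m "Suc n"]
    by (cases ps) (auto simp: paths_Cons delannoy_steps_def)
qed

lemma paths_card: "finite (delannoy_paths m n) \<and> card (delannoy_paths m n) = dd m n"
proof (induction m n rule: dd.induct)
  case 1 then show ?case by (simp add: paths_00)
next
  case (2 m) then show ?case by (simp add: paths_S0 card_image)
next
  case (3 n) then show ?case by (simp add: paths_0S card_image)
next
  case (4 m n)
  have d1: "Cons (1,0) ` delannoy_paths m (Suc n) \<inter> Cons (0,1) ` delannoy_paths (Suc m) n = {}" by auto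
  have d2: "(Cons (1,0) ` delannoy_paths m (Suc n) \<union> Cons (0,1) ` delannoy_paths (Suc m) n)
     \<inter> Cons (1,1) ` delannoy_paths m n = {}" by auto
  have f: "finite (Cons (1,0) ` delannoy_paths m (Suc n) \<union> Cons (0,1) ` delannoy_paths (Suc m) n)"
    "finite (Cons (1,1) ` delannoy_paths m n)" using 4 by auto
  have "card (delannoy_paths (Suc m) (Suc n)) =
     card (Cons (1,0) ` delannoy_paths m (Suc n) \<union> Cons (0,1) ` delannoy_paths (Suc m) n)
     + card (Cons (1,1) ` delannoy_paths m n)"
    unfolding paths_SS by (rule card_Un_disjoint[OF f d2])
  also have "\<dots> = card (Cons (1,0) ` delannoy_paths m (Suc n)) + card (Cons (0,1) ` delannoy_paths (Suc m) n)
     + card (Cons (1,1) ` delannoy_paths m n)"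
    using 4 by (subst card_Un_disjoint[OF _ _ d1]) auto
  also have "\<dots> = dd (Suc m) (Suc n)" using 4 by (simp add: card_image)
  finally show ?case using f by (simp add: paths_SS)
qed

lemma delannoy_dd: "delannoy m n = dd m n"
  using paths_card by (simp add: delannoy_def)

definition S :: "nat \<Rightarrow> int" where
  "S n = (\<Sum>k\<le>n. (-1) ^ k * int (dd (n - k) k))"

lemma S_rec: "S (Suc (Suc n)) = - S n"
proof -
  let ?f = "\<lambda>N k. (-1::int) ^ k * int (dd (N - k) k)"
  have A: "(\<Sum>k\<le>n. (-1::int) ^ Suc k * int (dd (n - k) (Suc k))) = S (Suc n) - 1"
  proof -
    have "S (Suc n) = ?f (Suc n) 0 + (\<Sum>k\<le>n. ?f (Suc n) (Suc k))"
      unfolding S_def by (rule sum.atMost_Suc_shift)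
    thus ?thesis by (simp add: dd_0)
  qed
  have B: "(\<Sum>k\<le>n. (-1::int) ^ Suc k * int (dd (Suc n - k) k)) = - (S (Suc n) - (-1) ^ Suc n)"
  proof -
    have "S (Suc n) = (\<Sum>k\<le>n. ?f (Suc n) k) + ?f (Suc n) (Suc n)"
      unfolding S_def by (rule sum.atMost_Suc)
    thus ?thesis by (simp add: dd_0' sum_negf)
  qed
  have C: "(\<Sum>k\<le>n. (-1::int) ^ Suc k * int (dd (n - k) k)) = - S n"
    by (simp add: S_def sum_negf)
  have rec: "\<And>k. k \<le> n \<Longrightarrow> (-1::int) ^ Suc k * int (dd (Suc n - k) (Suc k)) =
     (-1::int) ^ Suc k * int (dd (n - k) (Suc k)) + (-1::int) ^ Suc k * int (dd (Suc n - k) k)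
     + (-1::int) ^ Suc k * int (dd (n - k) k)"
  proof -
    fix k assume "k \<le> n"
    then have "Suc n - k = Suc (n - k)" by simp
    then show "?thesis k" by (simp add: algebra_simps)
  qed
  have "S (Suc (Suc n)) = ?f (Suc (Suc n)) 0 + (\<Sum>k\<le>Suc n. ?f (Suc (Suc n)) (Suc k))"
    unfolding S_def by (rule sum.atMost_Suc_shift)
  also have "\<dots> = 1 + (\<Sum>k\<le>n. ?f (Suc (Suc n)) (Suc k)) + ?f (Suc (Suc n)) (Suc (Suc n))"
    by (simp add: dd_0)
  also have "(\<Sum>k\<le>n. ?f (Suc (Suc n)) (Suc k)) =
     (\<Sum>k\<le>n. (-1::int) ^ Suc k * int (dd (Suc n - k) (Suc k)))" by simp
  also have "\<dots> = (\<Sum>k\<le>n. (-1::int) ^ Suc k * int (dd (n - k) (Suc k))) +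
     (\<Sum>k\<le>n. (-1::int) ^ Suc k * int (dd (Suc n - k) k)) +
     (\<Sum>k\<le>n. (-1::int) ^ Suc k * int (dd (n - k) k))"
    by (simp only: sum.distrib[symmetric]) (rule sum.cong[OF refl rec], simp)
  also have "?f (Suc (Suc n)) (Suc (Suc n)) = (-1) ^ n" by (simp add: dd_0')
  finally show ?thesis using A B C by simp
qed

lemma S_closed: "S n = (if odd n then 0 else if n mod 4 = 2 then -1 else 1)"
proof (induction n rule: nat_less_induct)
  case (1 n)
  show ?case
  proof (cases n)
    case 0 then show ?thesis by (simp add: S_def dd_0)
  next
    case (Suc m) note m = this
    show ?thesis
    proof (cases m)
      case 0 then show ?thesis using m by (simp add: S_def dd_0 dd_0')
    next
      case (Suc j)
      have "S j = (if odd j then 0 else if j mod 4 = 2 then -1 else 1)" using 1 m Suc by simp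
      then show ?thesis using m Suc S_rec[of j] by (auto simp: mod_Suc split: if_splits) presburger+
    qed
  qed
qed

theorem corollary5p2:
  fixes n :: nat
  assumes "n > 0"
  shows "(\<Sum>k=0..n. (-1::int) ^ k * int (delannoy (n - k) k)) =
    (if odd n then 0 else if n mod 4 = 2 then -1 else 1)"
  using S_closed[of n] by (simp add: S_def delannoy_dd atLeast0AtMost)

end
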